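(* Let $N, K \ge 1$ be integers and let $\lambda^-, \lambda^+ \in [-1,1]$. Let $W \in \mathbb{R}^{N\times N}$ belong to the class $\mathcal{W}(\lambda^-,\lambda^+)$ (defined in the context), and let $X, Y \in \mathbb{R}^{N\times K}$ satisfy $Y = WX$. Write $X = \mathbf{1}\bar{X}^T + X_c$ and $Y = \mathbf{1}\bar{Y}^T + Y_c$, where $\mathbf{1} = [1,\dots,1]^T \in \mathbb{R}^N$ and $\bar{X}, \bar{Y} \in \mathbb{R}^K$ are the column averages, $\bar{X}_k = \frac1N\sum_{i=1}^N X_{ik}$, $\bar{Y}_k = \frac1N\sum_{i=1}^N Y_{ik}$. Then: (i) the matrices $X^TY$ and $X_c^TY_c$ are symmetric; (ii) the following hold: $$\bar{X} = \bar{Y},$$ $$\lambda^- X_c^TX_c \preceq X_c^TY_c \preceq \lambda^+ X_c^TX_c,$$ $$(Y_c - \lambda^- X_c)^T(Y_c - \lambda^+ X_c) \preceq 0,$$ where $A \preceq B$ means $B - A$ is positive semidefinite; (iii) the three constraints in (ii) are LMI Gram-representable, i.e. each can be expressed as a finite set of linear matrix inequality (or linear) constraints in the entries of the Gram matrix of the scalars/vectors $\{X_{ik}, Y_{ik}\}_{i,k}$.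
   Context: $\mathcal{W}(\lambda^-,\lambda^+)$ denotes the set of real symmetric $N\times N$ matrices $W$ that are generalized doubly stochastic (i.e. $\sum_{i=1}^N w_{ij} = 1$ for all $j$ and $\sum_{j=1}^N w_{ij}=1$ for all $i$, with no nonnegativity requirement on the entries), and whose eigenvalues, apart from the eigenvalue $\lambda_1 = 1$ (associated with the eigenvector $\mathbf{1}$), all lie in $[\lambda^-,\lambda^+]$: $\lambda^- \le \lambda_N \le \dots \le \lambda_2 \le \lambda^+$. In the application, $X_{ik} = x_i^k$ and $Y_{ik} = y_i^k$ are one-dimensional local variables of agent $i$ at consensus step $k$, and the consensus step is $y_i^k = \sum_j w_{ij} x_j^k$. A constraint is called linearly (resp. LMI) Gram-representable if it can be expressed using a finite set of linear (resp. linear matrix inequality) constraints involving (parts of) the Gram matrix $G = P^TP$ of the variables collected as columns of $P$ (and possibly a vector of function values). *)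

theory Defs
  imports "HOL-Analysis.Analysis"
begin

text \<open>Matrices are rendered as \<open>real^'c^'r\<close> (rows indexed by 'r, columns by 'c).
  The agent index type 'n has N = CARD('n) elements, the step index type 'k has K = CARD('k).\<close>

definition ones :: "real^'n" where
  "ones = (\<chi> i. 1)"

definition gen_doubly_stochastic :: "real^'n^'n \<Rightarrow> bool" where
  "gen_doubly_stochastic W \<longleftrightarrow>
     (\<forall>j. (\<Sum>i\<in>UNIV. W$i$j) = 1) \<and> (\<forall>i. (\<Sum>j\<in>UNIV. W$i$j) = 1)"

definition symmetric_mat :: "real^'n^'n \<Rightarrow> bool" where
  "symmetric_mat A \<longleftrightarrow> transpose A = A"

text \<open>Eigenvalues other than the eigenvalue 1 associated with the eigenvector ones:
  for a real symmetric W with W ones = ones, these are exactly the eigenvalues of W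
  on the orthogonal complement of ones.\<close>
definition W_class :: "real \<Rightarrow> real \<Rightarrow> real^'n^'n \<Rightarrow> bool" where
  "W_class lm lp W \<longleftrightarrow> symmetric_mat W \<and> gen_doubly_stochastic W \<and>
     (\<forall>(v::real^'n) (\<mu>::real). v \<noteq> 0 \<and> v \<bullet> ones = 0 \<and> W *v v = \<mu> *\<^sub>R v
        \<longrightarrow> lm \<le> \<mu> \<and> \<mu> \<le> lp)"

definition psd :: "real^'n^'n \<Rightarrow> bool" where
  "psd A \<longleftrightarrow> (\<forall>x. 0 \<le> x \<bullet> (A *v x))"

definition loewner_le :: "real^'n^'n \<Rightarrow> real^'n^'n \<Rightarrow> bool" (infix "\<preceq>\<^sub>L" 50) where
  "A \<preceq>\<^sub>L B \<longleftrightarrow> psd (B - A)"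

definition colavg :: "real^'k^'n \<Rightarrow> real^'k" where
  "colavg X = (\<chi> k. (\<Sum>i\<in>UNIV. X$i$k) / real CARD('n))"

definition centered :: "real^'k^'n \<Rightarrow> real^'k^'n" where
  "centered X = (\<chi> i k. X$i$k - colavg X $ k)"

definition gram_vars :: "real^'k^'n \<Rightarrow> real^'k^'n \<Rightarrow> real^(('n \<times> 'k) + ('n \<times> 'k))" where
  "gram_vars X Y = (\<chi> a. case a of Inl (i,k) \<Rightarrow> X$i$k | Inr (i,k) \<Rightarrow> Y$i$k)"

definition gram :: "real^'k^'n \<Rightarrow> real^'k^'n \<Rightarrow> real^(('n \<times> 'k) + ('n \<times> 'k))^(('n \<times> 'k) + ('n \<times> 'k))" where
  "gram X Y = (\<chi> a b. gram_vars X Y $ a * gram_vars X Y $ b)"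

text \<open>Linear equality constraints are covered since a = 0 iff a I \<succeq> 0 and -a I \<succeq> 0.\<close>
definition lmi_gram_representable :: "(real^'k^'n \<Rightarrow> real^'k^'n \<Rightarrow> bool) \<Rightarrow> bool" where
  "lmi_gram_representable C \<longleftrightarrow>
     (\<exists>Ls :: ((real^(('n \<times> 'k) + ('n \<times> 'k))^(('n \<times> 'k) + ('n \<times> 'k)) \<Rightarrow> real^'k^'k) \<times> (real^'k^'k)) list.
        (\<forall>(L, B) \<in> set Ls. linear L) \<and>
        (\<forall>X Y. C X Y \<longleftrightarrow> (\<forall>(L, B) \<in> set Ls. psd (L (gram X Y) + B))))"

end

theory Submission imports Defs begin

lemma ones_inner: "v \<bullet> (ones::real^'n) = (\<Sum>i\<in>UNIV. v$i)"
  by (simp add: ones_def inner_vec_def)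

lemma W_maps_V:
  assumes "gen_doubly_stochastic W" "v \<bullet> ones = 0"
  shows "(W *v v) \<bullet> ones = 0"
proof -
  have "(W *v v) \<bullet> ones = (\<Sum>i\<in>UNIV. \<Sum>j\<in>UNIV. W$i$j * v$j)"
    by (simp add: ones_inner matrix_vector_mult_def)
  also have "\<dots> = (\<Sum>j\<in>UNIV. (\<Sum>i\<in>UNIV. W$i$j) * v$j)"
    by (subst sum.swap) (simp add: sum_distrib_right)
  also have "\<dots> = (\<Sum>j\<in>UNIV. v$j)" using assms(1) by (simp add: gen_doubly_stochastic_def)
  finally show ?thesis using assms(2) by (simp add: ones_inner)
qed

lemma sym_inner:
  fixes A :: "real^'n^'n"
  assumes "transpose A = A"
  shows "x \<bullet> (A *v y) = y \<bullet> (A *v x)"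
proof -
  have "x \<bullet> (A *v y) = (x v* A) \<bullet> y" by (simp add: dot_lmul_matrix)
  also have "x v* A = transpose A *v x" by simp
  finally show ?thesis using assms by (simp add: inner_commute)
qed

lemma min_eigen:
  fixes A :: "real^'n^'n" and v0 :: "real^'n"
  assumes sym: "transpose A = A"
    and inv: "\<And>v. v \<bullet> ones = 0 \<Longrightarrow> (A *v v) \<bullet> ones = 0"
    and ne: "v0 \<bullet> ones = 0" "v0 \<noteq> 0"
  shows "\<exists>u m. u \<bullet> ones = 0 \<and> u \<noteq> 0 \<and> A *v u = m *\<^sub>R u \<and>
            (\<forall>v. v \<bullet> ones = 0 \<longrightarrow> m * (v \<bullet> v) \<le> v \<bullet> (A *v v))"
proof -
  define S where "S = {v::real^'n. v \<bullet> ones = 0 \<and> norm v = 1}"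
  have "closed S" unfolding S_def
    by (intro closed_Collect_conj closed_Collect_eq continuous_intros)
  moreover have "bounded S" unfolding S_def bounded_iff by auto
  ultimately have cS: "compact S" by (simp add: compact_eq_bounded_closed)
  have "v0 /\<^sub>R norm v0 \<in> S" using ne by (auto simp: S_def inner_simps)
  hence Sne: "S \<noteq> {}" by auto
  have "continuous_on S (\<lambda>v. v \<bullet> (A *v v))"
    by (intro continuous_intros linear_continuous_on bounded_linear_intros
          matrix_vector_mul_bounded_linear)
  then obtain u where uS: "u \<in> S" and umin: "\<And>y. y \<in> S \<Longrightarrow> u \<bullet> (A *v u) \<le> y \<bullet> (A *v y)"
    using continuous_attains_inf[OF cS Sne] by blast
  define m where "m = u \<bullet> (A *v u)"
  have u1: "u \<bullet> ones = 0" "norm u = 1" using uS by (auto simp: S_def)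
  hence uu: "u \<bullet> u = 1" by (simp add: norm_eq_1)
  have low: "m * (v \<bullet> v) \<le> v \<bullet> (A *v v)" if "v \<bullet> ones = 0" for v
  proof (cases "v = 0")
    case True then show ?thesis by simp
  next
    case False
    let ?w = "v /\<^sub>R norm v"
    have "?w \<in> S" using False that by (auto simp: S_def inner_simps)
    hence "m \<le> ?w \<bullet> (A *v ?w)" using umin m_def by blast
    also have "?w \<bullet> (A *v ?w) = (v \<bullet> (A *v v)) / (norm v)^2"
      by (simp add: matrix_vector_mult_scaleR inner_simps power2_eq_square field_simps)
    finally have "m * (norm v)^2 \<le> v \<bullet> (A *v v)"
      using False by (simp add: field_simps)
    then show ?thesis by (simp add: power2_norm_eq_inner)
  qed
  define b where "b = A *v u - m *\<^sub>R u"
  have bV: "b \<bullet> ones = 0" using inv[OF u1(1)] u1(1) by (simp add: b_def inner_simps)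
  have key: "w \<bullet> b = 0" if wV: "w \<bullet> ones = 0" for w
  proof (rule ccontr)
    assume d0: "w \<bullet> b \<noteq> 0"
    define d where "d = w \<bullet> b"
    define Q where "Q = w \<bullet> (A *v w) - m * (w \<bullet> w)"
    have Q0: "Q \<ge> 0" using low[OF wV] by (simp add: Q_def)
    define t where "t = - d / (Q + 1)"
    have "(u + t *\<^sub>R w) \<bullet> ones = 0" using u1(1) wV by (simp add: inner_simps)
    hence "m * ((u + t *\<^sub>R w) \<bullet> (u + t *\<^sub>R w)) \<le> (u + t *\<^sub>R w) \<bullet> (A *v (u + t *\<^sub>R w))"
      by (rule low)
    moreover have "(u + t *\<^sub>R w) \<bullet> (A *v (u + t *\<^sub>R w)) - m * ((u + t *\<^sub>R w) \<bullet> (u + t *\<^sub>R w))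
        = 2 * t * d + t^2 * Q"
      using sym_inner[OF sym, of u w]
      by (simp add: matrix_vector_right_distrib matrix_vector_mult_scaleR inner_simps
           d_def Q_def b_def m_def power2_eq_square algebra_simps inner_commute uu)
    ultimately have nn: "0 \<le> 2 * t * d + t^2 * Q" by linarith
    have dt: "d = - (t * (Q + 1))" using Q0 by (simp add: t_def)
    have e: "(2 * t * d + t^2 * Q) * (Q+1)^2 = - (d^2 * (Q + 2))"
      unfolding dt by algebra
    have "- (d^2 * (Q + 2)) < 0" using Q0 d0 d_def by (simp add: mult_pos_pos)
    hence "(2 * t * d + t^2 * Q) * (Q+1)^2 < 0" using e by simp
    moreover have "(Q+1)^2 > 0" using Q0 by simp
    ultimately have "2 * t * d + t^2 * Q < 0" by (simp add: mult_less_0_iff)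
    then show False using nn by linarith
  qed
  have "b \<bullet> b = 0" using key[OF bV] .
  hence "b = 0" by simp
  hence "A *v u = m *\<^sub>R u" by (simp add: b_def)
  moreover have "u \<noteq> 0" using u1 by auto
  ultimately show ?thesis using u1 low by blast
qed

lemma quad_bounds:
  fixes W :: "real^'n^'n" and v :: "real^'n"
  assumes WC: "W_class lm lp W" and vV: "v \<bullet> ones = 0"
  shows "lm * (v \<bullet> v) \<le> v \<bullet> (W *v v) \<and> v \<bullet> (W *v v) \<le> lp * (v \<bullet> v)"
proof (cases "v = 0")
  case True then show ?thesis by simp
next
  case False
  have sym: "transpose W = W" and ds: "gen_doubly_stochastic W"
    and ev: "\<And>x \<mu>. x \<noteq> 0 \<Longrightarrow> x \<bullet> ones = 0 \<Longrightarrow> W *v x = \<mu> *\<^sub>R x \<Longrightarrow> lm \<le> \<mu> \<and> \<mu> \<le> lp"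
    using WC by (auto simp: W_class_def symmetric_mat_def)
  obtain u m where u: "u \<bullet> ones = 0" "u \<noteq> 0" "W *v u = m *\<^sub>R u"
     and lo: "\<forall>v. v \<bullet> ones = 0 \<longrightarrow> m * (v \<bullet> v) \<le> v \<bullet> (W *v v)"
    using min_eigen[OF sym W_maps_V[OF ds] vV False] by blast
  have "lm \<le> m" using ev[OF u(2) u(1) u(3)] by simp
  hence l1: "lm * (v \<bullet> v) \<le> v \<bullet> (W *v v)" using lo vV
    by (meson inner_ge_zero mult_right_mono order_trans)
  have sym2: "transpose (-W) = -W" using sym
    by (metis transpose_scalar scaleR_minus1_left)
  have neg: "(-W) *v x = - (W *v x)" for x by (simp add: matrix_vector_mult_def sum_negf vec_eq_iff)
  have inv2: "((-W) *v x) \<bullet> ones = 0" if "x \<bullet> ones = 0" for x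
    using W_maps_V[OF ds that] neg[of x] by (simp add: inner_simps)
  obtain u' m' where u': "u' \<bullet> ones = 0" "u' \<noteq> 0" "(-W) *v u' = m' *\<^sub>R u'"
     and lo': "\<forall>v. v \<bullet> ones = 0 \<longrightarrow> m' * (v \<bullet> v) \<le> v \<bullet> ((-W) *v v)"
    using min_eigen[OF sym2 inv2 vV False] by blast
  have "W *v u' = (-m') *\<^sub>R u'" using u'(3) neg[of u'] by (metis minus_minus scaleR_minus_left)
  hence ml: "-m' \<le> lp" using ev[OF u'(2) u'(1)] by blast
  have ml2: "m' * (v \<bullet> v) \<le> - (v \<bullet> (W *v v))" proof -
    have "v \<bullet> ((-W) *v v) = - (v \<bullet> (W *v v))" by (simp add: neg)
    thus ?thesis using lo' vV by auto
  qed
  have "v \<bullet> (W *v v) \<le> lp * (v \<bullet> v)"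
    proof -
    have "0 \<le> v \<bullet> v" by simp
    hence "(-m') * (v \<bullet> v) \<le> lp * (v \<bullet> v)" using ml by (rule mult_right_mono[rotated])
    thus ?thesis using ml2 by simp
  qed
  with l1 show ?thesis by blast
qed


lemma prod_bound:
  fixes W :: "real^'n^'n" and v :: "real^'n"
  assumes WC: "W_class lm lp W" and vV: "v \<bullet> ones = 0"
  shows "(W *v v - lm *\<^sub>R v) \<bullet> (W *v v - lp *\<^sub>R v) \<le> 0"
proof (cases "v = 0")
  case True then show ?thesis by simp
next
  case False
  have sym: "transpose W = W" and ds: "gen_doubly_stochastic W"
    using WC by (auto simp: W_class_def symmetric_mat_def)
  have qb: "lm * (y \<bullet> y) \<le> y \<bullet> (W *v y) \<and> y \<bullet> (W *v y) \<le> lp * (y \<bullet> y)" if "y \<bullet> ones = 0" for y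
    using quad_bounds[OF WC that] .
  have "lm * (v \<bullet> v) \<le> lp * (v \<bullet> v)" using qb[OF vV] by linarith
  moreover have "v \<bullet> v > 0" using False by simp
  ultimately have lmp: "lm \<le> lp" by simp
  define c where "c = (lm + lp) / 2"
  define r where "r = (lp - lm) / 2"
  have r0: "r \<ge> 0" using lmp by (simp add: r_def)
  have lmr: "lm = c - r" "lp = c + r" by (simp_all add: c_def r_def field_simps)
  define w where "w = W *v v - c *\<^sub>R v"
  have wV: "w \<bullet> ones = 0" using W_maps_V[OF ds vV] vV by (simp add: w_def inner_simps)
  have ww: "w \<bullet> w = w \<bullet> (W *v v) - c * (w \<bullet> v)" by (simp add: w_def inner_simps)
  have symm: "v \<bullet> (W *v w) = w \<bullet> (W *v v)" using sym_inner[OF sym] .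
  have main: "4 * s * (w \<bullet> w) \<le> 2 * r * (s^2 * (w \<bullet> w) + v \<bullet> v)" for s
  proof -
    define y1 where "y1 = s *\<^sub>R w + v"
    define y2 where "y2 = s *\<^sub>R w - v"
    have "y1 \<bullet> ones = 0" "y2 \<bullet> ones = 0" using wV vV by (simp_all add: y1_def y2_def inner_simps)
    hence b1: "y1 \<bullet> (W *v y1) - c * (y1 \<bullet> y1) \<le> r * (y1 \<bullet> y1)"
      and b2: "- r * (y2 \<bullet> y2) \<le> y2 \<bullet> (W *v y2) - c * (y2 \<bullet> y2)"
      using qb unfolding lmr by (auto simp: algebra_simps)
    have e1: "y1 \<bullet> (W *v y1) - y2 \<bullet> (W *v y2) = 4 * s * (w \<bullet> (W *v v))"
      using symm by (simp add: y1_def y2_def matrix_vector_right_distrib matrix_vector_mult_diff_distrib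
          matrix_vector_mult_scaleR inner_simps inner_commute algebra_simps)
    have e2: "y1 \<bullet> y1 - y2 \<bullet> y2 = 4 * s * (w \<bullet> v)"
      by (simp add: y1_def y2_def inner_simps inner_commute algebra_simps)
    have e3: "y1 \<bullet> y1 + y2 \<bullet> y2 = 2 * (s^2 * (w \<bullet> w) + v \<bullet> v)"
      by (simp add: y1_def y2_def inner_simps inner_commute algebra_simps power2_eq_square)
    have "4 * s * (w \<bullet> w) = (y1 \<bullet> (W *v y1) - c * (y1 \<bullet> y1)) - (y2 \<bullet> (W *v y2) - c * (y2 \<bullet> y2))"
    proof -
      have "(y1 \<bullet> (W *v y1) - c * (y1 \<bullet> y1)) - (y2 \<bullet> (W *v y2) - c * (y2 \<bullet> y2))
          = (y1 \<bullet> (W *v y1) - y2 \<bullet> (W *v y2)) - c * (y1 \<bullet> y1 - y2 \<bullet> y2)" by algebra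
      also have "\<dots> = 4 * s * (w \<bullet> (W *v v)) - c * (4 * s * (w \<bullet> v))" unfolding e1 e2 ..
      also have "\<dots> = 4 * s * (w \<bullet> w)" unfolding ww by algebra
      finally show ?thesis by simp
    qed
    also have "\<dots> \<le> r * (y1 \<bullet> y1) + r * (y2 \<bullet> y2)" using b1 b2 by linarith
    also have "\<dots> = r * (y1 \<bullet> y1 + y2 \<bullet> y2)" by algebra
    also have "\<dots> = 2 * r * (s^2 * (w \<bullet> w) + v \<bullet> v)" unfolding e3 by algebra
    finally show ?thesis .
  qed
  have fin: "w \<bullet> w \<le> r^2 * (v \<bullet> v)"
  proof (cases "r = 0")
    case True
    with main[of 1] have "w \<bullet> w \<le> 0" by simp
    then show ?thesis using True by simp
  next
    case False
    hence rp: "r > 0" using r0 by simp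
    have "4 * (1/r) * (w \<bullet> w) \<le> 2 * r * ((1/r)^2 * (w \<bullet> w) + v \<bullet> v)" by (rule main)
    hence "4 * (w \<bullet> w) \<le> 2 * (w \<bullet> w) + 2 * r^2 * (v \<bullet> v)" using rp
      by (simp add: field_simps power2_eq_square)
    then show ?thesis by simp
  qed
  have "W *v v - lm *\<^sub>R v = w + r *\<^sub>R v" "W *v v - lp *\<^sub>R v = w - r *\<^sub>R v"
    by (simp_all add: w_def lmr algebra_simps)
  hence "(W *v v - lm *\<^sub>R v) \<bullet> (W *v v - lp *\<^sub>R v) = w \<bullet> w - r^2 * (v \<bullet> v)"
    by (simp add: inner_simps inner_commute power2_eq_square)
  with fin show ?thesis by simp
qed


lemma colavg_mul:
  assumes ds: "gen_doubly_stochastic W"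
  shows "colavg (W ** X) = colavg X"
proof -
  have "(\<Sum>i\<in>UNIV. (W ** X)$i$k) = (\<Sum>j\<in>UNIV. X$j$k)" for k
  proof -
    have "(\<Sum>i\<in>UNIV. (W ** X)$i$k) = (\<Sum>i\<in>UNIV. \<Sum>j\<in>UNIV. W$i$j * X$j$k)"
      by (simp add: matrix_matrix_mult_def)
    also have "\<dots> = (\<Sum>j\<in>UNIV. (\<Sum>i\<in>UNIV. W$i$j) * X$j$k)"
      by (subst sum.swap) (simp add: sum_distrib_right)
    also have "\<dots> = (\<Sum>j\<in>UNIV. X$j$k)" using ds by (simp add: gen_doubly_stochastic_def)
    finally show ?thesis .
  qed
  then show ?thesis by (simp add: colavg_def vec_eq_iff)
qed

lemma centered_mul:
  assumes ds: "gen_doubly_stochastic W"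
  shows "centered (W ** X) = W ** centered X"
proof -
  have "(W ** X)$i$k - colavg X $ k = (\<Sum>j\<in>UNIV. W$i$j * (X$j$k - colavg X $ k))" for i k
  proof -
    have "(\<Sum>j\<in>UNIV. W$i$j * (X$j$k - colavg X $ k)) = (\<Sum>j\<in>UNIV. W$i$j * X$j$k) - (\<Sum>j\<in>UNIV. W$i$j) * colavg X $ k"
      by (simp add: algebra_simps sum_subtractf sum_distrib_right sum_distrib_left)
    also have "\<dots> = (W ** X)$i$k - colavg X $ k" using ds
      by (simp add: gen_doubly_stochastic_def matrix_matrix_mult_def)
    finally show ?thesis by simp
  qed
  then show ?thesis using colavg_mul[OF ds, of X]
    by (simp add: centered_def vec_eq_iff matrix_matrix_mult_def)
qed

lemma centered_V: "(centered X *v x) \<bullet> ones = 0"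
proof -
  have "(centered X *v x) \<bullet> ones = (\<Sum>i\<in>UNIV. \<Sum>k\<in>UNIV. (X$i$k - colavg X $ k) * x$k)"
    by (simp add: ones_inner matrix_vector_mult_def centered_def)
  also have "\<dots> = (\<Sum>k\<in>UNIV. ((\<Sum>i\<in>UNIV. X$i$k) - real CARD('a) * colavg X $ k) * x$k)"
    by (subst sum.swap) (simp add: sum_distrib_right sum_subtractf left_diff_distrib mult.assoc)
  also have "\<dots> = 0" by (simp add: colavg_def)
  finally show ?thesis .
qed

lemma quad_form:
  fixes A B :: "real^'k^'n" and x :: "real^'k"
  shows "x \<bullet> ((transpose A ** B) *v x) = (A *v x) \<bullet> (B *v x)"
proof -
  have "(transpose A ** B) *v x = transpose A *v (B *v x)" by (simp add: matrix_vector_mul_assoc)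
  also have "\<dots> = (B *v x) v* A" by simp
  finally have "x \<bullet> ((transpose A ** B) *v x) = ((B *v x) v* A) \<bullet> x" by (simp add: inner_commute)
  also have "\<dots> = (B *v x) \<bullet> (A *v x)" by (rule dot_lmul_matrix)
  finally show ?thesis by (simp add: inner_commute)
qed

lemma mv_diff: "(P - Q) *v x = P *v x - Q *v (x::real^'a)"
  by (simp add: matrix_vector_mult_diff_rdistrib)
lemma mv_scale: "(c *\<^sub>R P) *v x = c *\<^sub>R (P *v (x::real^'a))"
  by (simp add: scaleR_matrix_vector_assoc)
lemma mv_neg: "(- P) *v x = - (P *v (x::real^'a))"
  by (simp add: matrix_vector_mult_def sum_negf vec_eq_iff)


definition unX :: "real^(('n \<times> 'k) + ('n \<times> 'k)) \<Rightarrow> real^'k^'n" where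
  "unX v = (\<chi> i k. v $ Inl (i,k))"
definition unY :: "real^(('n \<times> 'k) + ('n \<times> 'k)) \<Rightarrow> real^'k^'n" where
  "unY v = (\<chi> i k. v $ Inr (i,k))"

lemma unX_gram: "unX (gram_vars X Y) = X" by (simp add: unX_def gram_vars_def vec_eq_iff)
lemma unY_gram: "unY (gram_vars X Y) = Y" by (simp add: unY_def gram_vars_def vec_eq_iff)
lemma linear_unX: "linear unX" by (rule linearI) (simp_all add: unX_def vec_eq_iff)
lemma linear_unY: "linear unY" by (rule linearI) (simp_all add: unY_def vec_eq_iff)
lemma linear_centered: "linear (centered :: real^'k^'n \<Rightarrow> real^'k^'n)"
  by (rule linearI)
     (simp_all add: centered_def colavg_def vec_eq_iff sum.distrib algebra_simps add_divide_distrib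
        scaleR_sum_right[symmetric] sum_distrib_left[symmetric] )

definition QL :: "('v::finite \<Rightarrow> real^'k^'n) \<Rightarrow> ('v \<Rightarrow> real^'k^'n) \<Rightarrow> real^'v^'v \<Rightarrow> real^'k^'k" where
  "QL f g G = (\<chi> k l. \<Sum>i\<in>UNIV. \<Sum>a\<in>UNIV. \<Sum>b\<in>UNIV. f a $ i $ k * g b $ i $ l * G $ a $ b)"

lemma linear_QL: "linear (QL f g)"
  by (rule linearI)
     (simp_all add: QL_def vec_eq_iff algebra_simps sum.distrib sum_distrib_left)

lemma lin_expand:
  fixes f :: "real^'v \<Rightarrow> real^'k^'n"
  assumes "linear f"
  shows "f v $ i $ k = (\<Sum>a\<in>UNIV. v $ a * f (axis a 1) $ i $ k)"
proof -
  have "f v = f (\<Sum>a\<in>UNIV. v $ a *\<^sub>R axis a 1)"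
    using basis_expansion[of v] by (simp add: scalar_mult_eq_scaleR)
  also have "\<dots> = (\<Sum>a\<in>UNIV. v $ a *\<^sub>R f (axis a 1))"
    using assms by (simp add: linear_sum linear_scale)
  finally show ?thesis by (simp add: sum_component)
qed

lemma QL_gram:
  fixes f g :: "real^(('n \<times> 'k) + ('n \<times> 'k)) \<Rightarrow> real^'k^'n"
  assumes "linear f" "linear g"
  shows "QL (\<lambda>a. f (axis a 1)) (\<lambda>a. g (axis a 1)) (gram X Y)
       = transpose (f (gram_vars X Y)) ** g (gram_vars X Y)"
proof -
  let ?v = "gram_vars X Y"
  have "(\<Sum>a\<in>UNIV. \<Sum>b\<in>UNIV. ?v $ a * (?v $ b * (f (axis a 1) $ i $ k * g (axis b 1) $ i $ l)))
      = (\<Sum>b\<in>UNIV. \<Sum>a\<in>UNIV. ?v $ b * (?v $ a * (f (axis a 1) $ i $ k * g (axis b 1) $ i $ l)))"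
    for i k l by (subst sum.swap) (simp add: mult_ac)
  then show ?thesis
    unfolding QL_def
    by (simp add: vec_eq_iff matrix_matrix_mult_def transpose_def gram_def
         lin_expand[OF assms(1), of ?v] lin_expand[OF assms(2), of ?v]
         sum_product sum_distrib_left sum_distrib_right mult_ac)
qed


lemma psd_neg_gram_iff:
  fixes F :: "real^'k^'n"
  shows "psd (- (transpose F ** F)) \<longleftrightarrow> F = 0"
proof
  assume h: "psd (- (transpose F ** F))"
  have "F *v x = 0" for x
  proof -
    have "0 \<le> x \<bullet> ((- (transpose F ** F)) *v x)" using h by (simp add: psd_def)
    also have "\<dots> = - ((F *v x) \<bullet> (F *v x))" by (simp add: mv_neg quad_form)
    finally have "(F *v x) \<bullet> (F *v x) \<le> 0" by simp
    thus ?thesis by (metis inner_eq_zero_iff inner_ge_zero order_antisym)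
  qed
  hence "column k F = 0" for k using matrix_vector_mult_basis[of F k] by simp
  thus "F = 0" by (simp add: column_def vec_eq_iff)
qed (simp add: psd_def)

theorem theorem2:
  fixes W :: "real^'n^'n" and X Y :: "real^'k^'n" and lm lp :: real
  assumes "-1 \<le> lm" "lm \<le> 1" "-1 \<le> lp" "lp \<le> 1"
    and "W_class lm lp W"
    and "Y = W ** X"
  shows "symmetric_mat (transpose X ** Y)
       \<and> symmetric_mat (transpose (centered X) ** centered Y)
       \<and> colavg X = colavg Y
       \<and> lm *\<^sub>R (transpose (centered X) ** centered X) \<preceq>\<^sub>L transpose (centered X) ** centered Y
       \<and> transpose (centered X) ** centered Y \<preceq>\<^sub>L lp *\<^sub>R (transpose (centered X) ** centered X)
       \<and> transpose (centered Y - lm *\<^sub>R centered X) ** (centered Y - lp *\<^sub>R centered X) \<preceq>\<^sub>L 0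
       \<and> lmi_gram_representable (\<lambda>(X'::real^'k^'n) Y'. colavg X' = colavg Y')
       \<and> lmi_gram_representable (\<lambda>(X'::real^'k^'n) Y'.
            lm *\<^sub>R (transpose (centered X') ** centered X') \<preceq>\<^sub>L transpose (centered X') ** centered Y'
          \<and> transpose (centered X') ** centered Y' \<preceq>\<^sub>L lp *\<^sub>R (transpose (centered X') ** centered X'))
       \<and> lmi_gram_representable (\<lambda>(X'::real^'k^'n) Y'.
            transpose (centered Y' - lm *\<^sub>R centered X') ** (centered Y' - lp *\<^sub>R centered X') \<preceq>\<^sub>L 0)"
proof -
  have WC: "W_class lm lp W" by fact
  have sym: "transpose W = W" and ds: "gen_doubly_stochastic W"
    using WC by (auto simp: W_class_def symmetric_mat_def)
  have Y: "Y = W ** X" by fact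
  have cY: "centered Y = W ** centered X" using centered_mul[OF ds] Y by simp
  have symgen: "symmetric_mat (transpose Z ** (W ** Z))" for Z :: "real^'k^'n"
    unfolding symmetric_mat_def using sym
    by (simp add: matrix_transpose_mul matrix_mul_assoc)
  have s1: "symmetric_mat (transpose X ** Y)" using symgen Y by simp
  have s2: "symmetric_mat (transpose (centered X) ** centered Y)" using symgen cY by simp
  have "colavg (W ** X) = colavg X" by (rule colavg_mul[OF ds])
  hence ca: "colavg X = colavg Y" using Y by simp
  let ?Xc = "centered X" and ?Yc = "centered Y"
  have Ycx: "?Yc *v x = W *v (?Xc *v x)" for x by (simp add: cY matrix_vector_mul_assoc)
  have l1: "lm *\<^sub>R (transpose ?Xc ** ?Xc) \<preceq>\<^sub>L transpose ?Xc ** ?Yc"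
    unfolding loewner_le_def psd_def
  proof
    fix x
    let ?u = "?Xc *v x"
    have "x \<bullet> ((transpose ?Xc ** ?Yc - lm *\<^sub>R (transpose ?Xc ** ?Xc)) *v x)
        = ?u \<bullet> (W *v ?u) - lm * (?u \<bullet> ?u)"
      by (simp add: mv_diff mv_scale inner_simps quad_form Ycx)
    then show "0 \<le> x \<bullet> ((transpose ?Xc ** ?Yc - lm *\<^sub>R (transpose ?Xc ** ?Xc)) *v x)"
      using quad_bounds[OF WC centered_V[of X x]] by simp
  qed
  have l2: "transpose ?Xc ** ?Yc \<preceq>\<^sub>L lp *\<^sub>R (transpose ?Xc ** ?Xc)"
    unfolding loewner_le_def psd_def
  proof
    fix x
    let ?u = "?Xc *v x"
    have "x \<bullet> ((lp *\<^sub>R (transpose ?Xc ** ?Xc) - transpose ?Xc ** ?Yc) *v x)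
        = lp * (?u \<bullet> ?u) - ?u \<bullet> (W *v ?u)"
      by (simp add: mv_diff mv_scale inner_simps quad_form Ycx)
    then show "0 \<le> x \<bullet> ((lp *\<^sub>R (transpose ?Xc ** ?Xc) - transpose ?Xc ** ?Yc) *v x)"
      using quad_bounds[OF WC centered_V[of X x]] by simp
  qed
  have l3: "transpose (?Yc - lm *\<^sub>R ?Xc) ** (?Yc - lp *\<^sub>R ?Xc) \<preceq>\<^sub>L 0"
    unfolding loewner_le_def psd_def
  proof
    fix x
    let ?u = "?Xc *v x"
    have "x \<bullet> ((0 - transpose (?Yc - lm *\<^sub>R ?Xc) ** (?Yc - lp *\<^sub>R ?Xc)) *v x)
        = - ((W *v ?u - lm *\<^sub>R ?u) \<bullet> (W *v ?u - lp *\<^sub>R ?u))"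
      by (simp add: mv_neg mv_diff mv_scale quad_form Ycx)
    then show "0 \<le> x \<bullet> ((0 - transpose (?Yc - lm *\<^sub>R ?Xc) ** (?Yc - lp *\<^sub>R ?Xc)) *v x)"
      using prod_bound[OF WC centered_V[of X x]] by simp
  qed
  define cX :: "real^(('n \<times> 'k) + ('n \<times> 'k)) \<Rightarrow> real^'k^'n" where "cX = (\<lambda>v. centered (unX v))"
  define cYf :: "real^(('n \<times> 'k) + ('n \<times> 'k)) \<Rightarrow> real^'k^'n" where "cYf = (\<lambda>v. centered (unY v))"
  have lcX: "linear cX" unfolding cX_def
    using linear_compose[OF linear_unX linear_centered] by (simp add: o_def)
  have lcY: "linear cYf" unfolding cYf_def
    using linear_compose[OF linear_unY linear_centered] by (simp add: o_def)
  have gX: "cX (gram_vars X' Y') = centered X'" for X' Y' by (simp add: cX_def unX_gram)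
  have gY: "cYf (gram_vars X' Y') = centered Y'" for X' Y' by (simp add: cYf_def unY_gram)
  define F :: "real^(('n \<times> 'k) + ('n \<times> 'k)) \<Rightarrow> real^'k^'n"
    where "F = (\<lambda>v. (unX v - cX v) - (unY v - cYf v))"
  have lF: "linear F" unfolding F_def
    by (intro real_vector.module_hom_sub linear_unX linear_unY lcX lcY)
  have FX: "F (gram_vars X' Y') = (\<chi> i k. colavg X' $ k - colavg Y' $ k)" for X' Y'
    by (simp add: F_def gX gY unX_gram unY_gram centered_def vec_eq_iff)
  have r1: "lmi_gram_representable (\<lambda>(X'::real^'k^'n) Y'. colavg X' = colavg Y')"
    unfolding lmi_gram_representable_def
  proof (intro exI[of _ "[(\<lambda>G. - QL (\<lambda>a. F (axis a 1)) (\<lambda>a. F (axis a 1)) G, 0)]"] conjI allI)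
    show "\<forall>(L, B)\<in>set [(\<lambda>G. - QL (\<lambda>a. F (axis a 1)) (\<lambda>a. F (axis a 1)) G, 0)]. linear L"
      by (simp add: real_vector.module_hom_neg linear_QL)
    fix X' Y' :: "real^'k^'n"
    have "(\<forall>(L, B)\<in>set [(\<lambda>G. - QL (\<lambda>a. F (axis a 1)) (\<lambda>a. F (axis a 1)) G, 0::real^'k^'k)].
              psd (L (gram X' Y') + B))
          \<longleftrightarrow> psd (- (transpose (F (gram_vars X' Y')) ** F (gram_vars X' Y')))"
      by (simp add: QL_gram[OF lF lF])
    also have "\<dots> \<longleftrightarrow> F (gram_vars X' Y') = 0" by (rule psd_neg_gram_iff)
    also have "\<dots> \<longleftrightarrow> colavg X' = colavg Y'"
      by (simp add: FX vec_eq_iff)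
    finally show "colavg X' = colavg Y' \<longleftrightarrow>
         (\<forall>(L, B)\<in>set [(\<lambda>G. - QL (\<lambda>a. F (axis a 1)) (\<lambda>a. F (axis a 1)) G, 0::real^'k^'k)].
              psd (L (gram X' Y') + B))" by simp
  qed
  define cXa where "cXa = (\<lambda>a. cX (axis a 1))"
  define cYa where "cYa = (\<lambda>a. cYf (axis a 1))"
  have QXY: "QL cXa cYa (gram X' Y') = transpose (centered X') ** centered Y'" for X' Y'
    unfolding cXa_def cYa_def using QL_gram[OF lcX lcY] by (simp add: gX gY)
  have QXX: "QL cXa cXa (gram X' Y') = transpose (centered X') ** centered X'" for X' Y'
    unfolding cXa_def using QL_gram[OF lcX lcX] by (simp add: gX)
  have r2: "lmi_gram_representable (\<lambda>(X'::real^'k^'n) Y'.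
            lm *\<^sub>R (transpose (centered X') ** centered X') \<preceq>\<^sub>L transpose (centered X') ** centered Y'
          \<and> transpose (centered X') ** centered Y' \<preceq>\<^sub>L lp *\<^sub>R (transpose (centered X') ** centered X'))"
    unfolding lmi_gram_representable_def
    apply (rule exI[of _ "[(\<lambda>G. QL cXa cYa G - lm *\<^sub>R QL cXa cXa G, 0),
                          (\<lambda>G. lp *\<^sub>R QL cXa cXa G - QL cXa cYa G, 0)]"])
    apply (simp add: QXY QXX loewner_le_def)
    apply (intro conjI real_vector.module_hom_sub real_vector.module_hom_scale linear_QL)
    done
  define D1 where "D1 = (\<lambda>v. cYf v - lm *\<^sub>R cX v)"
  define D2 where "D2 = (\<lambda>v. cYf v - lp *\<^sub>R cX v)"
  have lD1: "linear D1" unfolding D1_def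
    by (intro real_vector.module_hom_sub real_vector.module_hom_scale lcX lcY)
  have lD2: "linear D2" unfolding D2_def
    by (intro real_vector.module_hom_sub real_vector.module_hom_scale lcX lcY)
  have QD: "QL (\<lambda>a. D1 (axis a 1)) (\<lambda>a. D2 (axis a 1)) (gram X' Y')
      = transpose (centered Y' - lm *\<^sub>R centered X') ** (centered Y' - lp *\<^sub>R centered X')" for X' Y'
    using QL_gram[OF lD1 lD2] by (simp add: D1_def D2_def gX gY)
  have r3: "lmi_gram_representable (\<lambda>(X'::real^'k^'n) Y'.
            transpose (centered Y' - lm *\<^sub>R centered X') ** (centered Y' - lp *\<^sub>R centered X') \<preceq>\<^sub>L 0)"
    unfolding lmi_gram_representable_def
    apply (rule exI[of _ "[(\<lambda>G. - QL (\<lambda>a. D1 (axis a 1)) (\<lambda>a. D2 (axis a 1)) G, 0)]"])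
    apply (simp add: QD loewner_le_def real_vector.module_hom_neg linear_QL)
    done
  show ?thesis using s1 s2 ca l1 l2 l3 r1 r2 r3 by blast
qed

end
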